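(* Let $p$ be a prime, let $c\in[0,1]$ and let $\Theta(t)\in\mathbb{F}_p(\!(t^{-1})\!)$ be a Laurent series that exhibits $c$-escape of mass with respect to the sequence $\{t^k\}_{k\ge0}$. Then, for any irreducible polynomial $P(t)\in\mathbb{F}_p[t]$, the Laurent series $\Theta(P(t))\in\mathbb{F}_p(\!(t^{-1})\!)$ exhibits $c$-escape of mass with respect to the sequence $\{P(t)^k\}_{k\ge0}$.
   Context: For $\Theta(t)=\sum_{i=-h}^\infty a_i t^{-i}\in\mathbb{F}_p(\!(t^{-1})\!)$ and a polynomial $P(t)$, $\Theta(P(t)):=\sum_{i=-h}^\infty a_iP(t)^{-i}\in\mathbb{F}_p(\!(t^{-1})\!)$. Escape of mass (defined for quadratic irrationals): for a quadratic irrational $\Theta\in\mathbb{F}_q(\!(t^{-1})\!)$ and an irreducible $P\in\mathbb{F}_q[t]$, each $\Theta\cdot P^k$ is a quadratic irrational whose continued fraction expansion (polynomial partial quotients, of degree $\ge1$ after the zeroth) is eventually periodic; let $\ell_{\Theta P^k}$ be the period length and $A_1^{[\Theta P^k]},\dots,A_{\ell_{\Theta P^k}}^{[\Theta P^k]}$ the partial quotients of one period. Set $R_{k,n}=\frac{\sum_{i=1}^{\ell_{\Theta P^k}}\max\{\deg A_i^{[\Theta P^k]}-n,0\}}{\sum_{i=1}^{\ell_{\Theta P^k}}\deg A_i^{[\Theta P^k]}}$. $\Theta$ exhibits $c$ escape of mass with respect to $\{P^k\}_{k\ge0}$ if $\lim_{n\to\infty}\liminf_{k\to\infty}R_{k,n}\ge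 c$. *)

theory Defs
  imports "HOL-Computational_Algebra.Computational_Algebra"
          "HOL-Library.Extended_Real"
          "Berlekamp_Zassenhaus.Finite_Field"
begin

text \<open>We model F_q((t^{-1})) as formal Laurent series 'a fls in the variable
  X = t^{-1}.  A polynomial in t is embedded by sending t to fls_X_inv.\<close>

definition poly_to_fls :: "'a::field poly \<Rightarrow> 'a fls" where
  "poly_to_fls P = poly (map_poly fls_const P) fls_X_inv"

definition fls_polypart :: "'a::field fls \<Rightarrow> 'a poly" where
  "fls_polypart \<Theta> = Poly (map (\<lambda>j. fls_nth \<Theta> (- int j)) [0..<nat (- fls_subdegree \<Theta>) + 1])"

fun cf_rem :: "'a::field fls \<Rightarrow> nat \<Rightarrow> 'a fls" where
  "cf_rem \<Theta> 0 = \<Theta>"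
| "cf_rem \<Theta> (Suc n) = inverse (cf_rem \<Theta> n - poly_to_fls (fls_polypart (cf_rem \<Theta> n)))"

definition cf_pq :: "'a::field fls \<Rightarrow> nat \<Rightarrow> 'a poly" where
  "cf_pq \<Theta> n = fls_polypart (cf_rem \<Theta> n)"

definition is_rational_fls :: "'a::field fls \<Rightarrow> bool" where
  "is_rational_fls \<Theta> \<longleftrightarrow> (\<exists>a b. b \<noteq> 0 \<and> \<Theta> = poly_to_fls a / poly_to_fls b)"

definition quadratic_irrational :: "'a::field fls \<Rightarrow> bool" where
  "quadratic_irrational \<Theta> \<longleftrightarrow> \<not> is_rational_fls \<Theta> \<and>
     (\<exists>a b c. (a, b, c) \<noteq> (0, 0, 0) \<and>
        poly_to_fls a * \<Theta>^2 + poly_to_fls b * \<Theta> + poly_to_fls c = 0)"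

definition cf_period :: "'a::field fls \<Rightarrow> nat" where
  "cf_period \<Theta> = (LEAST l. l > 0 \<and> (\<exists>N. \<forall>n\<ge>N. cf_pq \<Theta> (n + l) = cf_pq \<Theta> n))"

definition cf_preperiod :: "'a::field fls \<Rightarrow> nat" where
  "cf_preperiod \<Theta> = (LEAST N. \<forall>n\<ge>N. cf_pq \<Theta> (n + cf_period \<Theta>) = cf_pq \<Theta> n)"

definition period_pq :: "'a::field fls \<Rightarrow> nat \<Rightarrow> 'a poly" where
  "period_pq \<Theta> i = cf_pq \<Theta> (cf_preperiod \<Theta> + i - 1)"

definition escape_ratio :: "'a::field fls \<Rightarrow> 'a poly \<Rightarrow> nat \<Rightarrow> nat \<Rightarrow> real" where
  "escape_ratio \<Theta> P k n =
     (let \<Psi> = \<Theta> * poly_to_fls (P ^ k); l = cf_period \<Psi> in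
      real (\<Sum>i=1..l. max (degree (period_pq \<Psi> i) - n) 0)
      / real (\<Sum>i=1..l. degree (period_pq \<Psi> i)))"

definition exhibits_escape_of_mass :: "real \<Rightarrow> 'a::field fls \<Rightarrow> 'a poly \<Rightarrow> bool" where
  "exhibits_escape_of_mass c \<Theta> P \<longleftrightarrow> quadratic_irrational \<Theta> \<and>
     (\<exists>L. (\<lambda>n. liminf (\<lambda>k. ereal (escape_ratio \<Theta> P k n))) \<longlonglongrightarrow> L \<and> ereal c \<le> L)"

text \<open>Substitution Theta(P(t)) = sum a_i P(t)^{-i}.  Writing Theta = X^d F(X) with F a power
  series, Theta(P) = u^d F(u) where u = P(t)^{-1} = 1/P in the variable X = t^{-1}.\<close>
definition fls_subst_poly :: "'a::field fls \<Rightarrow> 'a poly \<Rightarrow> 'a fls" where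
  "fls_subst_poly \<Theta> P =
     (let u = inverse (poly_to_fls P) in
      u powi fls_subdegree \<Theta> *
      fps_to_fls (fps_compose (fls_base_factor_to_fps \<Theta>) (fls_regpart u)))"

end

theory Submission
  imports Defs
begin
unbundle fps_syntax

lemma poly_to_fls_0 [simp]: "poly_to_fls 0 = 0"
  by (simp add: poly_to_fls_def)

lemma poly_to_fls_pCons: "poly_to_fls (pCons a p) = fls_const a + fls_X_inv * poly_to_fls p"
  by (cases "a = 0 \<and> p = 0") (auto simp: poly_to_fls_def map_poly_pCons)

lemma poly_to_fls_nth:
  "poly_to_fls (p :: 'a::field poly) $$ n = (if n \<le> 0 then Polynomial.coeff p (nat (-n)) else 0)"
proof (induction p arbitrary: n)
  case 0 then show ?case by simp
next
  case (pCons a p)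
  show ?case
  proof (cases "n = 0")
    case True then show ?thesis by (simp add: poly_to_fls_pCons fls_X_inv_times_conv_shift pCons.IH)
  next
    case False
    have "poly_to_fls (pCons a p) $$ n = poly_to_fls p $$ (n + 1)"
      using False by (simp add: poly_to_fls_pCons fls_X_inv_times_conv_shift)
    also have "\<dots> = (if n \<le> 0 then Polynomial.coeff (pCons a p) (nat (-n)) else 0)"
    proof (cases "n < 0")
      case True
      then have "nat (-n) = Suc (nat (- (n+1)))" by simp
      then show ?thesis using True by (simp add: pCons.IH)
    qed (use False in \<open>simp add: pCons.IH\<close>)
    finally show ?thesis .
  qed
qed

lemma poly_to_fls_const [simp]: "poly_to_fls [:c:] = fls_const c"
  by (simp add: poly_to_fls_pCons)

lemma poly_to_fls_add [simp]: "poly_to_fls (p + q) = poly_to_fls p + poly_to_fls (q :: 'a::field poly)"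
  by (rule fls_eqI) (simp add: poly_to_fls_nth)

lemma poly_to_fls_smult: "poly_to_fls (Polynomial.smult c p) = fls_const c * poly_to_fls (p :: 'a::field poly)"
  by (induction p) (simp_all add: poly_to_fls_pCons distrib_left mult.left_commute)

lemma poly_to_fls_mult [simp]: "poly_to_fls (p * q) = poly_to_fls p * poly_to_fls (q :: 'a::field poly)"
  by (induction p) (simp_all add: poly_to_fls_pCons poly_to_fls_smult distrib_right mult.assoc)

lemma poly_to_fls_1 [simp]: "poly_to_fls 1 = (1 :: 'a::field fls)"
  by (simp add: poly_to_fls_def)

lemma poly_to_fls_power [simp]: "poly_to_fls (p ^ n) = poly_to_fls (p :: 'a::field poly) ^ n"
  by (induction n) auto

lemma poly_to_fls_X [simp]: "poly_to_fls [:0, 1:] = (fls_X_inv :: 'a::field fls)"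
  by (simp add: poly_to_fls_pCons)

lemma poly_to_fls_eq_0_iff [simp]: "poly_to_fls p = 0 \<longleftrightarrow> p = (0 :: 'a::field poly)"
proof
  assume "poly_to_fls p = 0"
  then have "Polynomial.coeff p n = 0" for n
    using poly_to_fls_nth[of p "- int n"] by simp
  then show "p = 0" by (simp add: poly_eq_iff)
qed simp

lemma poly_to_fls_subdegree:
  assumes "p \<noteq> (0 :: 'a::field poly)"
  shows "fls_subdegree (poly_to_fls p) = - int (degree p)"
proof (rule fls_subdegree_eqI)
  show "poly_to_fls p $$ (- int (degree p)) \<noteq> 0" using assms by (simp add: poly_to_fls_nth)
  show "\<And>n. n < - int (degree p) \<Longrightarrow> poly_to_fls p $$ n = 0"
  proof -
    fix n assume "n < - int (degree p)"
    then have "degree p < nat (-n)" by linarith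
    then show "poly_to_fls p $$ n = 0" using \<open>n < - int (degree p)\<close>
      by (simp add: poly_to_fls_nth coeff_eq_0)
  qed
qed

lemma poly_to_fls_diff [simp]: "poly_to_fls (p - q) = poly_to_fls p - poly_to_fls (q :: 'a::field poly)"
  by (rule fls_eqI) (simp add: poly_to_fls_nth)

lemma poly_to_fls_inj: "poly_to_fls p = poly_to_fls q \<Longrightarrow> p = (q :: 'a::field poly)"
proof -
  assume h: "poly_to_fls p = poly_to_fls q"
  have "poly_to_fls (p - q) = 0"
    by (simp only: poly_to_fls_diff h diff_self)
  then show "p = q" by (simp only: poly_to_fls_eq_0_iff right_minus_eq)
qed


section \<open>Polynomial part\<close>

definition small :: "'a::field fls \<Rightarrow> bool" where
  "small f \<longleftrightarrow> (\<forall>n\<le>0. f $$ n = 0)"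

lemma small_0 [simp]: "small 0" by (simp add: small_def)

lemma Poly_map_coeff:
  assumes "degree q < N"
  shows "Poly (map (Polynomial.coeff q) [0..<N]) = q"
proof (rule poly_eqI)
  fix n
  show "Polynomial.coeff (Poly (map (Polynomial.coeff q) [0..<N])) n = Polynomial.coeff q n"
    using assms by (auto simp: nth_default_def coeff_eq_0)
qed

lemma polypart_add_small:
  assumes "small f"
  shows "fls_polypart (poly_to_fls q + f) = (q :: 'a::field poly)"
proof -
  define y where "y = poly_to_fls q + f"
  have yn: "y $$ (- int j) = Polynomial.coeff q j" for j
    using assms by (simp add: y_def poly_to_fls_nth small_def)
  have "degree q < nat (- fls_subdegree y) + 1"
  proof (cases "q = 0")
    case False
    then have "y $$ (- int (degree q)) \<noteq> 0" by (simp add: yn)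
    then have "fls_subdegree y \<le> - int (degree q)" by (rule fls_subdegree_leI)
    then show ?thesis by linarith
  qed simp
  then have "fls_polypart y = q"
    unfolding fls_polypart_def yn by (rule Poly_map_coeff)
  then show ?thesis by (simp add: y_def)
qed

lemma small_sub_polypart: "small (x - poly_to_fls (fls_polypart x))"
  unfolding small_def
proof (intro allI impI)
  fix n :: int assume n: "n \<le> 0"
  define N where "N = nat (- fls_subdegree x) + 1"
  define j where "j = nat (-n)"
  have nj: "n = - int j" using n by (simp add: j_def)
  have c: "Polynomial.coeff (fls_polypart x) j = (if j < N then x $$ (- int j) else 0)"
    by (simp add: fls_polypart_def N_def nth_default_def del: upt_Suc)
  show "(x - poly_to_fls (fls_polypart x)) $$ n = 0"
  proof (cases "j < N")
    case True then show ?thesis using n c by (simp add: poly_to_fls_nth nj)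
  next
    case False
    then have "n < fls_subdegree x" using nj by (simp add: N_def)
    then show ?thesis using n c False by (simp add: poly_to_fls_nth nj)
  qed
qed

section \<open>Rationality\<close>

lemma rat_0: "is_rational_fls (0 :: 'a::field fls)"
  unfolding is_rational_fls_def by (rule exI[of _ 0], rule exI[of _ 1]) simp

lemma rat_inverse:
  assumes "is_rational_fls (x :: 'a::field fls)"
  shows "is_rational_fls (inverse x)"
proof -
  obtain a b where ab: "b \<noteq> 0" "x = poly_to_fls a / poly_to_fls b"
    using assms by (auto simp: is_rational_fls_def)
  show ?thesis
  proof (cases "a = 0")
    case True then show ?thesis using ab rat_0 by simp
  next
    case False
    then have "inverse x = poly_to_fls b / poly_to_fls a" using ab by simp
    then show ?thesis using False unfolding is_rational_fls_def by blast
  qed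
qed

lemma rat_add_poly:
  assumes "is_rational_fls (x :: 'a::field fls)"
  shows "is_rational_fls (poly_to_fls q + x)"
proof -
  obtain a b where ab: "b \<noteq> 0" "x = poly_to_fls a / poly_to_fls b"
    using assms by (auto simp: is_rational_fls_def)
  have "poly_to_fls q + x = poly_to_fls (q * b + a) / poly_to_fls b"
    using ab by (simp add: field_simps)
  then show ?thesis using ab unfolding is_rational_fls_def by blast
qed

lemma cf_rem_cf_rem: "cf_rem (cf_rem y m) n = cf_rem y (m + n)"
  by (induction n) simp_all

lemma rat_cf_step:
  assumes "is_rational_fls (cf_rem x (Suc m))"
  shows "is_rational_fls (cf_rem x m)"
proof -
  define r where "r = cf_rem x m"
  have "cf_rem x (Suc m) = inverse (r - poly_to_fls (fls_polypart r))" by (simp add: r_def)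
  then have "r = poly_to_fls (fls_polypart r) + inverse (cf_rem x (Suc m))" by simp
  then show ?thesis using assms rat_add_poly rat_inverse r_def by metis
qed

lemma rat_cf_down: "is_rational_fls (cf_rem x (m + j)) \<Longrightarrow> is_rational_fls (cf_rem x m)"
proof (induction j)
  case (Suc j)
  then show ?case using rat_cf_step[of x "m + j"] by simp
qed simp

lemma cf_zero_rat: "cf_rem x n = 0 \<Longrightarrow> is_rational_fls x"
  using rat_cf_down[of x 0 n] rat_0 by simp

lemma small_frac:
  assumes "b \<noteq> 0" "r = 0 \<or> degree r < degree (b :: 'a::field poly)"
  shows "small (poly_to_fls r / poly_to_fls b)"
proof (cases "r = 0")
  case False
  then have d: "degree r < degree b" using assms by simp
  have "fls_subdegree (poly_to_fls r / poly_to_fls b) = - int (degree r) + int (degree b)"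
    using False assms(1) by (simp add: divide_inverse poly_to_fls_subdegree)
  then have "fls_subdegree (poly_to_fls r / poly_to_fls b) > 0" using d by simp
  then show ?thesis by (simp add: small_def)
qed simp

lemma rat_terminates_aux:
  "b \<noteq> 0 \<Longrightarrow> \<exists>n. cf_rem (poly_to_fls a / poly_to_fls b) n = (0 :: 'a::field fls)"
proof (induction "degree b" arbitrary: a b rule: less_induct)
  case less
  define y where "y = poly_to_fls a / poly_to_fls b"
  define q where "q = a div b"
  define r where "r = a mod b"
  have "a = q * b + r" by (simp add: q_def r_def)
  then have "poly_to_fls a = poly_to_fls q * poly_to_fls b + poly_to_fls r" by (metis poly_to_fls_add poly_to_fls_mult)
  then have y: "y = poly_to_fls q + poly_to_fls r / poly_to_fls b"
    using less.prems by (simp add: y_def field_simps)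
  have sm: "small (poly_to_fls r / poly_to_fls b)"
    using less.prems degree_mod_less[of b a] by (intro small_frac) (auto simp: r_def)
  have pp: "fls_polypart y = q" unfolding y by (rule polypart_add_small[OF sm])
  have c1: "cf_rem y 1 = inverse (poly_to_fls r / poly_to_fls b)"
    by (simp add: pp) (simp add: y)
  show ?case
  proof (cases "r = 0")
    case True
    then have "cf_rem y 1 = 0" using c1 by simp
    then show ?thesis unfolding y_def by blast
  next
    case False
    then have d: "degree r < degree b" using degree_mod_less[of b a] less.prems by (simp add: r_def)
    have "cf_rem y 1 = poly_to_fls b / poly_to_fls r" using c1 by simp
    moreover obtain n where "cf_rem (poly_to_fls b / poly_to_fls r) n = 0"
      using less.hyps[OF d False] by blast
    ultimately have "cf_rem y (1 + n) = 0" by (metis cf_rem_cf_rem)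
    then show ?thesis unfolding y_def by blast
  qed
qed

lemma rat_terminates: "is_rational_fls (x :: 'a::field fls) \<Longrightarrow> \<exists>n. cf_rem x n = 0"
  unfolding is_rational_fls_def using rat_terminates_aux by blast

section \<open>Ratio inequality\<close>

lemma ratio_ineq:
  fixes e :: "nat \<Rightarrow> nat" and d :: nat
  assumes d: "d \<ge> 1"
  shows "real (\<Sum>i\<in>I. max (e i - n) 0) / real (\<Sum>i\<in>I. e i)
       \<le> real (\<Sum>i\<in>I. max (e i * d - n) 0) / real (\<Sum>i\<in>I. e i * d)"
proof -
  define A where "A = (\<Sum>i\<in>I. e i - n)"
  define B where "B = (\<Sum>i\<in>I. e i)"
  define A' where "A' = (\<Sum>i\<in>I. e i * d - n)"
  have B': "(\<Sum>i\<in>I. e i * d) = B * d" by (simp add: B_def sum_distrib_right)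
  have "A * d \<le> A'"
    unfolding A_def A'_def sum_distrib_right
  proof (rule sum_mono)
    fix i
    have "n \<le> n * d" using d by simp
    then show "(e i - n) * d \<le> e i * d - n" by (metis diff_mult_distrib diff_le_mono2)
  qed
  then have AA: "real A * real d \<le> real A'" by (metis of_nat_mono of_nat_mult)
  show ?thesis
  proof (cases "B = 0")
    case True then show ?thesis by (simp add: B' B_def[symmetric])
  next
    case False
    have "real A / real B = (real A * real d) / (real B * real d)" using d by simp
    also have "\<dots> \<le> real A' / (real B * real d)"
      using AA False d by (intro divide_right_mono) auto
    finally show ?thesis by (simp add: A_def B_def A'_def B')
  qed
qed

lemma escape_antitone: "escape_ratio y Q k (Suc n) \<le> escape_ratio y Q k n"
  unfolding escape_ratio_def Let_def
proof (rule divide_right_mono)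
  show "0 \<le> real (\<Sum>i = 1..cf_period (y * poly_to_fls (Q ^ k)). degree (period_pq (y * poly_to_fls (Q ^ k)) i))"
    by (rule of_nat_0_le_iff)
qed (intro of_nat_mono sum_mono, auto)

section \<open>Substitution\<close>

locale subst =
  fixes P :: "'a::field poly"
  assumes degP: "degree P > 0"
begin

definition u :: "'a fls" where "u = inverse (poly_to_fls P)"
definition U :: "'a fps" where "U = fls_regpart u"
abbreviation sg :: "'a fls \<Rightarrow> 'a fls" where "sg x \<equiv> fls_subst_poly x P"

lemma P_nz: "P \<noteq> 0" using degP by auto

lemma u_nz: "u \<noteq> 0" using P_nz by (simp add: u_def)

lemma sd_u: "fls_subdegree u = int (degree P)"
  using P_nz by (simp add: u_def poly_to_fls_subdegree)

lemma U_0: "U $ 0 = 0"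
  using sd_u degP by (simp add: U_def)

lemma fps_to_fls_U: "fps_to_fls U = u"
  using sd_u by (simp add: U_def)

lemma U_nz: "U \<noteq> 0" using fps_to_fls_U u_nz by auto

lemma sg_def': "sg x = u powi fls_subdegree x * fps_to_fls (fls_base_factor_to_fps x oo U)"
  by (simp add: fls_subst_poly_def U_def u_def Let_def)

lemma sg_0 [simp]: "sg 0 = 0"
  by (simp add: sg_def')

lemma sg_rep: "sg (fls_shift (-m) (fps_to_fls F)) = u powi m * fps_to_fls (F oo U)"
proof (cases "F = 0")
  case True then show ?thesis by simp
next
  case False
  define s where "s = subdegree F"
  define G where "G = fps_shift s F"
  have F: "F = G * fps_X ^ s" unfolding G_def s_def by (rule subdegree_decompose)
  define x where "x = fls_shift (-m) (fps_to_fls F)"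
  have xnz: "x \<noteq> 0" using False by (simp add: x_def fls_shift_eq0_iff)
  have sdx: "fls_subdegree x = m + int s"
    using False by (simp add: x_def fls_subdegree_fls_to_fps s_def)
  have bx: "fls_base_factor_to_fps x = G"
  proof (rule fps_ext)
    fix n
    have "fls_base_factor_to_fps x $ n = x $$ (m + int s + int n)"
      by (simp add: fls_base_factor_to_fps_nth sdx ac_simps)
    also have "\<dots> = fps_to_fls F $$ (int (s + n))" by (simp add: x_def)
    also have "\<dots> = F $ (s + n)" by (simp add: nat_add_distrib)
    finally show "fls_base_factor_to_fps x $ n = G $ n" by (simp add: G_def add.commute)
  qed
  have "sg x = u powi (m + int s) * fps_to_fls (G oo U)"
    by (simp only: sg_def' sdx bx)
  also have "\<dots> = u powi m * (u ^ s * fps_to_fls (G oo U))"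
    using u_nz by (simp add: power_int_add)
  also have "u ^ s * fps_to_fls (G oo U) = fps_to_fls (F oo U)"
    by (simp add: F fps_compose_mult_distrib[OF U_0] fps_compose_power[OF U_0, symmetric]
          fls_times_fps_to_fls fps_to_fls_power fps_to_fls_U U_0 mult.commute)
  finally show ?thesis by (simp add: x_def)
qed

lemma rep: "m \<le> fls_subdegree x \<or> x = 0 \<Longrightarrow>
  x = fls_shift (-m) (fps_to_fls (fls_regpart (fls_shift m x)))"
  by (auto simp: fls_shift_nonneg_subdegree)

lemma sg_add: "sg (x + y) = sg x + sg y"
proof -
  define m where "m = min (fls_subdegree x) (fls_subdegree y)"
  define F where "F = fls_regpart (fls_shift m x)"
  define G where "G = fls_regpart (fls_shift m y)"
  have x: "x = fls_shift (-m) (fps_to_fls F)" unfolding F_def by (rule rep) (simp add: m_def)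
  have y: "y = fls_shift (-m) (fps_to_fls G)" unfolding G_def by (rule rep) (simp add: m_def)
  have e: "x + y = fls_shift (-m) (fps_to_fls (F + G))" by (simp add: x y)
  have "sg (x + y) = u powi m * fps_to_fls ((F + G) oo U)" unfolding e by (rule sg_rep)
  also have "\<dots> = sg x + sg y"
  proof -
    have sx: "sg x = u powi m * fps_to_fls (F oo U)" by (subst x) (rule sg_rep)
    have sy: "sg y = u powi m * fps_to_fls (G oo U)" by (subst y) (rule sg_rep)
    show ?thesis by (simp add: sx sy fps_compose_add_distrib distrib_left)
  qed
  finally show ?thesis .
qed

lemma sg_mult: "sg (x * y) = sg x * sg y"
proof -
  define m where "m = fls_subdegree x"
  define n where "n = fls_subdegree y"
  define F where "F = fls_regpart (fls_shift m x)"
  define G where "G = fls_regpart (fls_shift n y)"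
  have x: "x = fls_shift (-m) (fps_to_fls F)" unfolding F_def by (rule rep) (simp add: m_def)
  have y: "y = fls_shift (-n) (fps_to_fls G)" unfolding G_def by (rule rep) (simp add: n_def)
  have e: "x * y = fls_shift (-(m + n)) (fps_to_fls (F * G))"
    by (subst x, subst y) (simp add: fls_times_both_shifted_simp fls_times_fps_to_fls add.commute)
  have "sg (x * y) = u powi (m + n) * fps_to_fls ((F * G) oo U)" unfolding e by (rule sg_rep)
  also have "\<dots> = sg x * sg y"
  proof -
    have sx: "sg x = u powi m * fps_to_fls (F oo U)" by (subst x) (rule sg_rep)
    have sy: "sg y = u powi n * fps_to_fls (G oo U)" by (subst y) (rule sg_rep)
    show ?thesis using u_nz
      by (simp add: sx sy fps_compose_mult_distrib[OF U_0] fls_times_fps_to_fls power_int_add mult_ac)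
  qed
  finally show ?thesis .
qed

lemma sg_1: "sg 1 = 1"
  using sg_rep[of 0 1] by simp

lemma sg_uminus: "sg (- x) = - sg x"
  using sg_add[of "-x" x] by (simp add: eq_neg_iff_add_eq_0)

lemma sg_diff: "sg (x - y) = sg x - sg y"
proof -
  have "sg x = sg (x - y) + sg y" using sg_add[of "x - y" y] by simp
  then show ?thesis by (simp add: algebra_simps)
qed

lemma sg_inj0: "sg x = 0 \<Longrightarrow> x = 0"
proof -
  assume h: "sg x = 0"
  have "fls_base_factor_to_fps x oo U = 0"
    using h u_nz by (simp add: sg_def')
  then have "fls_base_factor_to_fps x = 0"
    using U_nz by (simp add: fps_compose_eq_0_iff[OF U_0])
  then show "x = 0"
    using fls_base_factor_to_fps_nonzero by blast
qed

lemma sg_inverse: "sg (inverse x) = inverse (sg x)"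
proof (cases "x = 0")
  case False
  have "sg x * sg (inverse x) = 1" using False by (simp add: sg_mult[symmetric] sg_1)
  then show ?thesis by (metis inverse_unique)
qed simp

lemma sg_power: "sg (x ^ n) = sg x ^ n"
  by (induction n) (simp_all add: sg_1 sg_mult)

lemma sg_const: "sg (fls_const c) = fls_const c"
proof -
  have "fls_const c = fls_shift (-0) (fps_to_fls (fps_const c))" by simp
  then have "sg (fls_const c) = u powi 0 * fps_to_fls (fps_const c oo U)"
    by (metis sg_rep)
  then show ?thesis by simp
qed

lemma sg_X_inv: "sg fls_X_inv = poly_to_fls P"
proof -
  have "fls_X_inv = fls_shift (-(-1)) (fps_to_fls (1 :: 'a fps))" by (simp add: fls_X_inv_conv_shift_1)
  then have "sg fls_X_inv = u powi (-1) * fps_to_fls (1 oo U)"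
    by (metis sg_rep)
  also have "\<dots> = inverse u" by (simp add: power_int_minus)
  finally show ?thesis by (simp add: u_def)
qed

lemma sg_poly: "sg (poly_to_fls q) = poly_to_fls (pcompose q P)"
proof (induction q)
  case (pCons a p)
  have "sg (poly_to_fls (pCons a p)) = sg (fls_const a) + sg fls_X_inv * sg (poly_to_fls p)"
    by (simp only: poly_to_fls_pCons sg_add sg_mult)
  also have "\<dots> = fls_const a + poly_to_fls P * poly_to_fls (pcompose p P)"
    by (simp only: sg_const sg_X_inv pCons.IH)
  also have "\<dots> = poly_to_fls (pcompose (pCons a p) P)"
    by (simp only: pcompose_pCons poly_to_fls_add poly_to_fls_mult poly_to_fls_const)
  finally show ?case .
qed simp

lemma small_sg: "small f \<Longrightarrow> small (sg f)"
proof -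
  assume sf: "small f"
  show "small (sg f)"
  proof (cases "f = 0")
    case False
    then have "f $$ fls_subdegree f \<noteq> 0" by simp
    have "1 \<le> fls_subdegree f"
    proof (rule ccontr)
      assume "\<not> 1 \<le> fls_subdegree f"
      then have "fls_subdegree f \<le> 0" by simp
      then show False using sf \<open>f $$ fls_subdegree f \<noteq> 0\<close> unfolding small_def by blast
    qed
    then have "f = fls_shift (-1) (fps_to_fls (fls_regpart (fls_shift 1 f)))" by (intro rep) simp
    then have e: "sg f = u powi 1 * fps_to_fls (fls_regpart (fls_shift 1 f) oo U)" by (metis sg_rep)
    define W where "W = fps_to_fls (fls_regpart (fls_shift 1 f) oo U)"
    have "sg f $$ n = 0" if n: "n \<le> 0" for n
    proof (cases "W = 0")
      case True then show ?thesis using e by (simp add: W_def)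
    next
      case False
      have "0 \<le> fls_subdegree W" unfolding W_def by (rule fls_subdegree_fls_to_fps_gt0)
      then have "n < fls_subdegree u + fls_subdegree W" using sd_u degP n by linarith
      then show ?thesis using e by (simp add: W_def fls_times_nth_eq0)
    qed
    then show ?thesis by (simp add: small_def)
  qed simp
qed

lemma sg_polypart: "fls_polypart (sg x) = pcompose (fls_polypart x) P"
proof -
  define A where "A = fls_polypart x"
  define f where "f = x - poly_to_fls A"
  have sf: "small f" unfolding f_def A_def by (rule small_sub_polypart)
  have "x = poly_to_fls A + f" by (simp add: f_def)
  then have "sg x = poly_to_fls (pcompose A P) + sg f" by (metis sg_add sg_poly)
  then show ?thesis using polypart_add_small[OF small_sg[OF sf]] by (simp add: A_def)
qed

lemma cf_rem_sg: "cf_rem (sg x) n = sg (cf_rem x n)"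
  by (induction n) (simp_all add: sg_polypart sg_inverse sg_diff sg_poly)

lemma cf_pq_sg: "cf_pq (sg x) n = pcompose (cf_pq x n) P"
  by (simp add: cf_pq_def cf_rem_sg sg_polypart)

lemma pcompose_inj: "pcompose p P = pcompose q P \<longleftrightarrow> p = q"
proof
  assume "pcompose p P = pcompose q P"
  then have "pcompose (p - q) P = 0" by (simp add: pcompose_diff)
  then show "p = q" using pcompose_eq_0_iff[OF degP] by simp
qed simp

lemma cf_pq_sg_eq: "cf_pq (sg x) a = cf_pq (sg x) b \<longleftrightarrow> cf_pq x a = cf_pq x b"
  by (simp add: cf_pq_sg pcompose_inj)

lemma cf_period_sg: "cf_period (sg x) = cf_period x"
  by (simp add: cf_period_def cf_pq_sg_eq)

lemma cf_preperiod_sg: "cf_preperiod (sg x) = cf_preperiod x"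
  by (simp add: cf_preperiod_def cf_pq_sg_eq cf_period_sg)

lemma period_pq_sg: "period_pq (sg x) i = pcompose (period_pq x i) P"
  by (simp add: period_pq_def cf_preperiod_sg cf_pq_sg)

lemma sg_shift: "sg \<Theta> * poly_to_fls (P ^ k) = sg (\<Theta> * poly_to_fls ([:0, 1:] ^ k))"
  by (simp add: sg_mult sg_power sg_X_inv)

lemma escape_cmp: "escape_ratio \<Theta> [:0, 1:] k n \<le> escape_ratio (sg \<Theta>) P k n"
proof -
  define \<Psi> where "\<Psi> = \<Theta> * poly_to_fls ([:0, 1:] ^ k)"
  have "escape_ratio (sg \<Theta>) P k n =
      real (\<Sum>i=1..cf_period \<Psi>. max (degree (period_pq \<Psi> i) * degree P - n) 0)
      / real (\<Sum>i=1..cf_period \<Psi>. degree (period_pq \<Psi> i) * degree P)"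
    unfolding escape_ratio_def Let_def sg_shift \<Psi>_def[symmetric]
    by (simp add: cf_period_sg period_pq_sg degree_pcompose)
  moreover have "escape_ratio \<Theta> [:0, 1:] k n =
      real (\<Sum>i=1..cf_period \<Psi>. max (degree (period_pq \<Psi> i) - n) 0)
      / real (\<Sum>i=1..cf_period \<Psi>. degree (period_pq \<Psi> i))"
    unfolding escape_ratio_def Let_def \<Psi>_def by simp
  ultimately show ?thesis using degP
    by (simp only:) (rule ratio_ineq, simp)
qed

end

theorem theorem1p19:
  fixes \<Theta> :: "'p::prime_card mod_ring fls"
    and c :: real
    and P :: "'p mod_ring poly"
  assumes "0 \<le> c" and "c \<le> 1"
    and "exhibits_escape_of_mass c \<Theta> [:0, 1:]"
    and "irreducible P"
  shows "exhibits_escape_of_mass c (fls_subst_poly \<Theta> P) P"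
proof -
  have Pnz: "P \<noteq> 0" using assms(4) by auto
  have "\<not> is_unit P" using assms(4) by (rule irreducible_not_unit)
  then have degP: "degree P > 0" using is_unit_iff_degree[OF Pnz] Pnz by auto
  interpret S: subst P by unfold_locales (rule degP)
  from assms(3) have qi: "quadratic_irrational \<Theta>"
    and "\<exists>L. (\<lambda>n. liminf (\<lambda>k. ereal (escape_ratio \<Theta> [:0, 1:] k n))) \<longlonglongrightarrow> L \<and> ereal c \<le> L"
    unfolding exhibits_escape_of_mass_def by blast+
  then obtain L where L: "(\<lambda>n. liminf (\<lambda>k. ereal (escape_ratio \<Theta> [:0, 1:] k n))) \<longlonglongrightarrow> L"
    and cL: "ereal c \<le> L" by blast
  have qi': "quadratic_irrational (fls_subst_poly \<Theta> P)"
    unfolding quadratic_irrational_def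
  proof (intro conjI)
    show "\<not> is_rational_fls (fls_subst_poly \<Theta> P)"
    proof
      assume "is_rational_fls (fls_subst_poly \<Theta> P)"
      then obtain n where "cf_rem (fls_subst_poly \<Theta> P) n = 0" using rat_terminates by blast
      then have "cf_rem \<Theta> n = 0" using S.cf_rem_sg S.sg_inj0 by metis
      then have "is_rational_fls \<Theta>" by (rule cf_zero_rat)
      then show False using qi by (simp add: quadratic_irrational_def)
    qed
    obtain a b c' where abc: "(a, b, c') \<noteq> (0, 0, 0)"
      "poly_to_fls a * \<Theta>^2 + poly_to_fls b * \<Theta> + poly_to_fls c' = 0"
      using qi unfolding quadratic_irrational_def by blast
    have ne: "(pcompose a P, pcompose b P, pcompose c' P) \<noteq> (0, 0, 0)"
      using abc(1) pcompose_eq_0_iff[OF degP] by auto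
    have "fls_subst_poly (poly_to_fls a * \<Theta>^2 + poly_to_fls b * \<Theta> + poly_to_fls c') P = 0"
      using abc(2) by simp
    then have "poly_to_fls (pcompose a P) * (fls_subst_poly \<Theta> P)^2
        + poly_to_fls (pcompose b P) * fls_subst_poly \<Theta> P + poly_to_fls (pcompose c' P) = 0"
      by (simp add: S.sg_add S.sg_mult S.sg_power S.sg_poly)
    then show "\<exists>a b c. (a, b, c) \<noteq> (0, 0, 0) \<and>
        poly_to_fls a * (fls_subst_poly \<Theta> P)^2 + poly_to_fls b * fls_subst_poly \<Theta> P + poly_to_fls c = 0"
      using ne by blast
  qed
  define g where "g n = liminf (\<lambda>k. ereal (escape_ratio (fls_subst_poly \<Theta> P) P k n))" for n
  have dec: "decseq g"
  proof (rule decseq_SucI)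
    fix n show "g (Suc n) \<le> g n"
      unfolding g_def by (intro Liminf_mono always_eventually allI) (simp add: escape_antitone)
  qed
  have gl: "g \<longlonglongrightarrow> (INF n. g n)" using dec by (rule LIMSEQ_INF)
  have "L \<le> (INF n. g n)"
  proof (rule LIMSEQ_le[OF L gl])
    show "\<exists>N. \<forall>n\<ge>N. liminf (\<lambda>k. ereal (escape_ratio \<Theta> [:0, 1:] k n)) \<le> g n"
      unfolding g_def by (intro exI allI impI Liminf_mono always_eventually) (simp add: S.escape_cmp)
  qed
  then have "g \<longlonglongrightarrow> (INF n. g n) \<and> ereal c \<le> (INF n. g n)" using gl cL by auto
  then show ?thesis
    unfolding exhibits_escape_of_mass_def g_def using qi' by blast
qed

end
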